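(* For every positive integer $m$ and every positive integer $n$, $u_{m,n}\equiv^2_{m-1,n}v_{m,n}$.
   Context: Let $\Sigma_m=\{a_0,\dots,a_{m-1}\}$. For positive integers $i,n$ define words: $u_{1,n}=a_0$, $v_{1,n}=\varepsilon$ (empty word); $u_{2,n}=a_0(a_1a_0)^{2n}$, $v_{2,n}=(a_1a_0)^{2n}$; $u_{2i+1,n}=(a_0a_1\cdots a_{2i})^n\,u_{2i,n}$, $v_{2i+1,n}=(a_0a_1\cdots a_{2i})^n\,v_{2i,n}$; $u_{2i+2,n}=u_{2i+1,n}\,(a_{2i+1}a_{2i}\cdots a_0)^n$, $v_{2i+2,n}=v_{2i+1,n}\,(a_{2i+1}a_{2i}\cdots a_0)^n$. Words are finite structures with universe $\{1,\dots,|w|\}$, unary predicates $Q_a$ marking positions carrying $a$, and the order $<$. $\mathrm{FO}^2_n[<]$ is first-order logic over this signature using only the variables $x,y$ with quantifier depth at most $n$; $\mathrm{FO}^2_{k,n}[<]$ is the set of its formulas in which every path in the parse tree has at most $k$ blocks of alternating quantifiers. $u\equiv^2_{k,n}v$ means $u$ and $v$ satisfy the same sentences of $\mathrm{FO}^2_{k,n}[<]$. *)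

theory Defs
  imports Main
begin

text \<open>Letters a_0, a_1, ... are represented by natural numbers 0, 1, ...;
  words are lists of letters. Positions are 0-based (0 ..< length w), which is
  order-isomorphic to the paper's 1..|w|.\<close>

datatype var = X | Y

datatype fo2 =
    TT
  | FF
  | Lett nat var
  | NLett nat var
  | Less var var
  | NLess var var
  | Eq var var
  | NEq var var
  | Neg fo2
  | Conj fo2 fo2
  | Disj fo2 fo2
  | Ex var fo2
  | All var fo2

text \<open>Negation is a constructor; for counting alternation blocks, formulas are
  considered after pushing negations to the atoms (negation swaps the
  quantifier type along the path), as in the standard definition.\<close>

fun sat :: "nat list \<Rightarrow> (var \<Rightarrow> nat) \<Rightarrow> fo2 \<Rightarrow> bool" where
  "sat w s TT = True"
| "sat w s FF = False"
| "sat w s (Lett a x) = (w ! s x = a)"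
| "sat w s (NLett a x) = (w ! s x \<noteq> a)"
| "sat w s (Less x y) = (s x < s y)"
| "sat w s (NLess x y) = (\<not> s x < s y)"
| "sat w s (Eq x y) = (s x = s y)"
| "sat w s (NEq x y) = (s x \<noteq> s y)"
| "sat w s (Neg f) = (\<not> sat w s f)"
| "sat w s (Conj f g) = (sat w s f \<and> sat w s g)"
| "sat w s (Disj f g) = (sat w s f \<or> sat w s g)"
| "sat w s (Ex x f) = (\<exists>i < length w. sat w (s(x := i)) f)"
| "sat w s (All x f) = (\<forall>i < length w. sat w (s(x := i)) f)"

fun freev :: "fo2 \<Rightarrow> var set" where
  "freev TT = {}"
| "freev FF = {}"
| "freev (Lett a x) = {x}"
| "freev (NLett a x) = {x}"
| "freev (Less x y) = {x, y}"
| "freev (NLess x y) = {x, y}"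
| "freev (Eq x y) = {x, y}"
| "freev (NEq x y) = {x, y}"
| "freev (Neg f) = freev f"
| "freev (Conj f g) = freev f \<union> freev g"
| "freev (Disj f g) = freev f \<union> freev g"
| "freev (Ex x f) = freev f - {x}"
| "freev (All x f) = freev f - {x}"

fun letters :: "fo2 \<Rightarrow> nat set" where
  "letters (Lett a x) = {a}"
| "letters (NLett a x) = {a}"
| "letters (Neg f) = letters f"
| "letters (Conj f g) = letters f \<union> letters g"
| "letters (Disj f g) = letters f \<union> letters g"
| "letters (Ex x f) = letters f"
| "letters (All x f) = letters f"
| "letters _ = {}"

fun qdepth :: "fo2 \<Rightarrow> nat" where
  "qdepth (Neg f) = qdepth f"
| "qdepth (Conj f g) = max (qdepth f) (qdepth g)"
| "qdepth (Disj f g) = max (qdepth f) (qdepth g)"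
| "qdepth (Ex x f) = Suc (qdepth f)"
| "qdepth (All x f) = Suc (qdepth f)"
| "qdepth _ = 0"

text \<open>blk pol prev f: the maximal number of quantifier blocks on a path of the
  parse tree of f (in negation normal form). pol = True means we are under an
  even number of negations; prev is the type of the last quantifier seen above
  (Some True = existential, Some False = universal, None = none yet).\<close>
fun blk :: "bool \<Rightarrow> bool option \<Rightarrow> fo2 \<Rightarrow> nat" where
  "blk p q (Neg f) = blk (\<not> p) q f"
| "blk p q (Conj f g) = max (blk p q f) (blk p q g)"
| "blk p q (Disj f g) = max (blk p q f) (blk p q g)"
| "blk p q (Ex x f) = (if q = Some p then 0 else 1) + blk p (Some p) f"
| "blk p q (All x f) = (if q = Some (\<not> p) then 0 else 1) + blk p (Some (\<not> p)) f"
| "blk p q _ = 0"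

definition alt_blocks :: "fo2 \<Rightarrow> nat" where
  "alt_blocks f = blk True None f"

definition FO2_kn :: "nat \<Rightarrow> nat \<Rightarrow> nat \<Rightarrow> fo2 set" where
  "FO2_kn m k n = {f. freev f = {} \<and> letters f \<subseteq> {..<m} \<and> qdepth f \<le> n \<and> alt_blocks f \<le> k}"

definition models :: "nat list \<Rightarrow> fo2 \<Rightarrow> bool" where
  "models w f = sat w (\<lambda>_. 0) f"

definition equiv2 :: "nat \<Rightarrow> nat \<Rightarrow> nat \<Rightarrow> nat list \<Rightarrow> nat list \<Rightarrow> bool" where
  "equiv2 m k n u v = (\<forall>f \<in> FO2_kn m k n. models u f \<longleftrightarrow> models v f)"

text \<open>For m = 2i+1 (i \<ge> 1) the prepended block is (a_0 ... a_{2i})^n = (a_0..a_{m-1})^n;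
  for m = 2i+2 (i \<ge> 1) the appended block is (a_{2i+1} ... a_0)^n = (a_{m-1}..a_0)^n.\<close>
fun uw :: "nat \<Rightarrow> nat \<Rightarrow> nat list" where
  "uw 0 n = []"
| "uw (Suc 0) n = [0]"
| "uw (Suc (Suc 0)) n = 0 # concat (replicate (2 * n) [1, 0])"
| "uw (Suc (Suc (Suc k))) n =
     (if odd (Suc (Suc (Suc k)))
      then concat (replicate n [0..<Suc (Suc (Suc k))]) @ uw (Suc (Suc k)) n
      else uw (Suc (Suc k)) n @ concat (replicate n (rev [0..<Suc (Suc (Suc k))])))"

fun vw :: "nat \<Rightarrow> nat \<Rightarrow> nat list" where
  "vw 0 n = []"
| "vw (Suc 0) n = []"
| "vw (Suc (Suc 0)) n = concat (replicate (2 * n) [1, 0])"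
| "vw (Suc (Suc (Suc k))) n =
     (if odd (Suc (Suc (Suc k)))
      then concat (replicate n [0..<Suc (Suc (Suc k))]) @ vw (Suc (Suc k)) n
      else vw (Suc (Suc k)) n @ concat (replicate n (rev [0..<Suc (Suc (Suc k))])))"

end

theory Submission
  imports Defs
begin


datatype bt = BF | BL | BR

fun alw :: "bt \<Rightarrow> nat \<Rightarrow> nat \<Rightarrow> bool" where
  "alw BF a a' = True"
| "alw BL a a' = (a' \<le> a)"
| "alw BR a a' = (a \<le> a')"

definition sd :: "nat \<Rightarrow> nat \<Rightarrow> nat \<Rightarrow> nat \<Rightarrow> bool" where
  "sd a a' b b' \<equiv> ((a < a') = (b < b') \<and> (a' < a) = (b' < b))"

fun Win :: "bt list \<Rightarrow> nat \<Rightarrow> nat list \<Rightarrow> nat list \<Rightarrow> nat \<Rightarrow> nat \<Rightarrow> bool" where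
  "Win \<pi> 0 A B a b = (a < length A \<and> b < length B \<and> A!a = B!b)"
| "Win \<pi> (Suc r) A B a b = (a < length A \<and> b < length B \<and> A!a = B!b \<and>
    (case \<pi> of [] \<Rightarrow> True | T # \<rho> \<Rightarrow>
      (\<forall>a'<length A. alw T a a' \<longrightarrow> (\<exists>b'<length B. sd a a' b b' \<and> Win \<pi> r A B a' b')) \<and>
      (case \<rho> of [] \<Rightarrow> True | T' # \<rho>' \<Rightarrow>
         (\<forall>b'<length B. alw T' b b' \<longrightarrow> (\<exists>a'<length A. sd b b' a a' \<and> Win \<rho> r B A b' a')))))"

lemma Win_base: "Win \<pi> r A B a b \<Longrightarrow> a < length A \<and> b < length B \<and> A!a = B!b"
  by (cases r) auto

lemma Win_same: "Win (T#\<rho>) (Suc r) A B a b \<Longrightarrow> a' < length A \<Longrightarrow> alw T a a' \<Longrightarrow>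
   \<exists>b'<length B. sd a a' b b' \<and> Win (T#\<rho>) r A B a' b'"
  by auto

lemma Win_sw: "Win (T#T'#\<rho>) (Suc r) A B a b \<Longrightarrow> b' < length B \<Longrightarrow> alw T' b b' \<Longrightarrow>
   \<exists>a'<length A. sd b b' a a' \<and> Win (T'#\<rho>) r B A b' a'"
  by auto

lemma Win_SucI:
  assumes "a < length A" "b < length B" "A!a = B!b"
    and "\<And>a'. a' < length A \<Longrightarrow> alw T a a' \<Longrightarrow> \<exists>b'<length B. sd a a' b b' \<and> Win (T#\<rho>) r A B a' b'"
    and "\<And>T' \<rho>' b'. \<rho> = T'#\<rho>' \<Longrightarrow> b' < length B \<Longrightarrow> alw T' b b' \<Longrightarrow> \<exists>a'<length A. sd b b' a a' \<and> Win \<rho> r B A b' a'"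
  shows "Win (T#\<rho>) (Suc r) A B a b"
  using assms by (auto split: list.split)

lemma Win_0I: "a < length A \<Longrightarrow> b < length B \<Longrightarrow> A!a = B!b \<Longrightarrow> Win \<pi> 0 A B a b"
  by simp

lemma Win_nil: "Win [] r A B a b = (a < length A \<and> b < length B \<and> A!a = B!b)"
  by (cases r) auto

definition weaker :: "bt list \<Rightarrow> bt list \<Rightarrow> bool" where
  "weaker \<pi>' \<pi> \<equiv> length \<pi>' \<le> length \<pi> \<and> (\<forall>k<length \<pi>'. \<forall>a a'. alw (\<pi>'!k) a a' \<longrightarrow> alw (\<pi>!k) a a')"

lemma weaker_Cons: "weaker (T'#\<rho>') \<pi> \<Longrightarrow> \<exists>T \<rho>. \<pi> = T#\<rho> \<and> (\<forall>a a'. alw T' a a' \<longrightarrow> alw T a a') \<and> weaker \<rho>' \<rho>"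
  unfolding weaker_def
  apply (cases \<pi>)
   apply simp
  apply (rule_tac x="hd \<pi>" in exI, rule_tac x="tl \<pi>" in exI)
  by auto

lemma Win_mono: "Win \<pi> r A B a b \<Longrightarrow> r' \<le> r \<Longrightarrow> weaker \<pi>' \<pi> \<Longrightarrow> Win \<pi>' r' A B a b"
proof (induction r' arbitrary: r \<pi> \<pi>' A B a b)
  case 0
  then show ?case using Win_base by auto
next
  case (Suc r')
  then obtain r0 where r0: "r = Suc r0" by (cases r) auto
  have base: "a < length A" "b < length B" "A!a = B!b" using Suc.prems Win_base by auto
  show ?case
  proof (cases \<pi>')
    case Nil
    then show ?thesis using base by simp
  next
    case (Cons T' \<rho>')
    from weaker_Cons[OF Suc.prems(3)[unfolded Cons]] obtain T \<rho> where
      P: "\<pi> = T#\<rho>" "\<forall>a a'. alw T' a a' \<longrightarrow> alw T a a'" "weaker \<rho>' \<rho>" by blast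
    show ?thesis unfolding Cons
    proof (rule Win_SucI[OF base])
      fix a' assume "a' < length A" "alw T' a a'"
      then obtain b' where "b' < length B" "sd a a' b b'" "Win (T#\<rho>) r0 A B a' b'"
        using Win_same[of T \<rho> r0 A B a b a'] Suc.prems(1) P r0 by auto
      moreover have "Win (T'#\<rho>') r' A B a' b'"
        using Suc.IH \<open>Win (T#\<rho>) r0 A B a' b'\<close> Suc.prems(2) r0 Suc.prems(3) Cons P by auto
      ultimately show "\<exists>b'<length B. sd a a' b b' \<and> Win (T'#\<rho>') r' A B a' b'" by blast
    next
      fix T2' \<rho>2' b' assume h: "\<rho>' = T2'#\<rho>2'" "b' < length B" "alw T2' b b'"
      from weaker_Cons[OF P(3)[unfolded h(1)]] obtain T2 \<rho>2 where
        P2: "\<rho> = T2#\<rho>2" "\<forall>a a'. alw T2' a a' \<longrightarrow> alw T2 a a'" "weaker \<rho>2' \<rho>2" by blast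
      obtain a' where "a' < length A" "sd b b' a a'" "Win \<rho> r0 B A b' a'"
        using Win_sw[of T T2 \<rho>2 r0 A B a b b'] Suc.prems(1) P P2 r0 h by auto
      moreover have "Win \<rho>' r' B A b' a'"
        using Suc.IH \<open>Win \<rho> r0 B A b' a'\<close> Suc.prems(2) r0 P(3) by auto
      ultimately show "\<exists>a'<length A. sd b b' a a' \<and> Win \<rho>' r' B A b' a'" by blast
    qed
  qed
qed

fun mir :: "bt \<Rightarrow> bt" where "mir BF = BF" | "mir BL = BR" | "mir BR = BL"

lemma alw_mir: "a < N \<Longrightarrow> a' < N \<Longrightarrow> alw (mir T) (N - Suc a) (N - Suc a') = alw T a a'"
  by (cases T) auto

lemma Win_rev: "Win \<pi> r A B a b \<Longrightarrow> Win (map mir \<pi>) r (rev A) (rev B) (length A - Suc a) (length B - Suc b)"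
proof (induction r arbitrary: \<pi> A B a b)
  case 0
  then show ?case by (auto simp: rev_nth)
next
  case (Suc r)
  have base: "a < length A" "b < length B" "A!a = B!b" using Suc.prems Win_base by auto
  show ?case
  proof (cases \<pi>)
    case Nil
    then show ?thesis using base by (auto simp: rev_nth)
  next
    case (Cons T \<rho>)
    show ?thesis unfolding Cons list.map
    proof (rule Win_SucI)
      show "length A - Suc a < length (rev A)" "length B - Suc b < length (rev B)" using base by auto
      show "rev A ! (length A - Suc a) = rev B ! (length B - Suc b)" using base by (auto simp: rev_nth)
    next
      fix a2 assume a2: "a2 < length (rev A)" "alw (mir T) (length A - Suc a) a2"
      define a' where "a' = length A - Suc a2"
      have a2e: "a2 = length A - Suc a'" "a' < length A" using a2 unfolding a'_def by auto
      have "alw T a a'" using a2 a2e alw_mir[of a "length A" a' T] base by auto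
      then obtain b' where b': "b' < length B" "sd a a' b b'" "Win (T#\<rho>) r A B a' b'"
        using Win_same[of T \<rho> r A B a b a'] Suc.prems Cons a2e by auto
      have "Win (map mir (T#\<rho>)) r (rev A) (rev B) (length A - Suc a') (length B - Suc b')"
        using Suc.IH b'(3) by blast
      moreover have "sd (length A - Suc a) a2 (length B - Suc b) (length B - Suc b')"
        using b'(2) a2e base b'(1) unfolding sd_def by auto
      ultimately show "\<exists>b2<length (rev B). sd (length A - Suc a) a2 (length B - Suc b) b2 \<and> Win (mir T # map mir \<rho>) r (rev A) (rev B) a2 b2"
        using b'(1) a2e by (intro exI[of _ "length B - Suc b'"]) auto
    next
      fix T2 \<rho>2 b2 assume h: "map mir \<rho> = T2 # \<rho>2" "b2 < length (rev B)" "alw T2 (length B - Suc b) b2"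
      obtain T1 \<rho>1 where r1: "\<rho> = T1#\<rho>1" "T2 = mir T1" "\<rho>2 = map mir \<rho>1" using h(1) by (cases \<rho>) auto
      define b' where "b' = length B - Suc b2"
      have b2e: "b2 = length B - Suc b'" "b' < length B" using h unfolding b'_def by auto
      have "alw T1 b b'" using h b2e alw_mir[of b "length B" b' T1] base r1 by auto
      then obtain a' where a': "a' < length A" "sd b b' a a'" "Win \<rho> r B A b' a'"
        using Win_sw[of T T1 \<rho>1 r A B a b b'] Suc.prems Cons r1 b2e by auto
      have "Win (map mir \<rho>) r (rev B) (rev A) (length B - Suc b') (length A - Suc a')"
        using Suc.IH a'(3) by blast
      moreover have "sd (length B - Suc b) b2 (length A - Suc a) (length A - Suc a')"
        using a'(2) b2e base a'(1) unfolding sd_def by auto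
      ultimately show "\<exists>a2<length (rev A). sd (length B - Suc b) b2 (length A - Suc a) a2 \<and> Win (map mir \<rho>) r (rev B) (rev A) b2 a2"
        using a'(1) b2e by (intro exI[of _ "length A - Suc a'"]) auto
    qed
  qed
qed

definition Init :: "bt list \<Rightarrow> nat \<Rightarrow> nat list \<Rightarrow> nat list \<Rightarrow> bool" where
  "Init \<pi> r A B \<equiv> \<forall>a<length A. \<exists>b<length B. Win \<pi> r A B a b"

lemma Init_rev: "Init \<pi> r A B \<Longrightarrow> Init (map mir \<pi>) r (rev A) (rev B)"
  unfolding Init_def
proof (intro allI impI)
  fix a2 assume H: "\<forall>a<length A. \<exists>b<length B. Win \<pi> r A B a b" and a2: "a2 < length (rev A)"
  define a where "a = length A - Suc a2"
  have "a < length A" "a2 = length A - Suc a" using a2 unfolding a_def by auto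
  then obtain b where "b < length B" "Win \<pi> r A B a b" using H by auto
  then show "\<exists>b2<length (rev B). Win (map mir \<pi>) r (rev A) (rev B) a2 b2"
    using Win_rev \<open>a2 = _\<close> by (intro exI[of _ "length B - Suc b"]) auto
qed




abbreviation sig :: "nat \<Rightarrow> bt list" where "sig i \<equiv> replicate i BF @ [BR]"
abbreviation rho :: "nat \<Rightarrow> bt list" where "rho i \<equiv> replicate i BF @ [BL]"

lemma nth_concat_rep: "d < n * length p \<Longrightarrow> concat (replicate n p) ! d = p ! (d mod length p)"
proof (induction n arbitrary: d)
  case 0 then show ?case by simp
next
  case (Suc n)
  show ?case
  proof (cases "d < length p")
    case True then show ?thesis by (simp add: nth_append)
  next
    case False
    then have "concat (replicate (Suc n) p) ! d = concat (replicate n p) ! (d - length p)"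
      by (simp add: nth_append)
    also have "\<dots> = p ! ((d - length p) mod length p)" using Suc False by auto
    also have "(d - length p) mod length p = d mod length p" using False le_mod_geq by auto
    finally show ?thesis .
  qed
qed

locale PLc =
  fixes p :: "nat list" and n :: nat and j :: nat
begin

definition B :: "nat list" where "B = concat (replicate n p)"

lemma lenB: "length B = n * length p" unfolding B_def by (simp add: length_concat sum_list_replicate)

lemma nthB: "d < length B \<Longrightarrow> B ! d = p ! (d mod length p) \<and> d div length p < n \<and> 0 < length p"
proof -
  assume d: "d < length B"
  then have lp: "0 < length p" using lenB by (cases "length p") auto
  have "d div length p < n" using d lenB lp by (simp add: less_mult_imp_div_less)
  then show ?thesis using nth_concat_rep[of d n p] d lenB lp unfolding B_def by auto
qed

lemma setB: "set B \<subseteq> set p" unfolding B_def by auto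

lemma esc: "t < n \<Longrightarrow> c \<in> set p \<Longrightarrow> \<exists>e<length B. e div length p = t \<and> B ! e = c"
proof -
  assume t: "t < n" and c: "c \<in> set p"
  then obtain oo where o: "oo < length p" "p ! oo = c" by (auto simp: in_set_conv_nth)
  define e where "e = t * length p + oo"
  have "e < n * length p"
  proof -
    have "e < t * length p + length p" using o unfolding e_def by simp
    also have "\<dots> = Suc t * length p" by simp
    also have "\<dots> \<le> n * length p" using t by (intro mult_le_mono1) auto
    finally show ?thesis .
  qed
  moreover have "e div length p = t" "e mod length p = oo" proof -
    have lp: "0 < length p" using o by auto
    have "e = oo + t * length p" unfolding e_def by simp
    then show "e div length p = t" "e mod length p = oo" using o lp by simp_all
  qed
  ultimately show ?thesis using nthB[of e] lenB o by (intro exI[of _ e]) auto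
qed

lemma letter_in: "k < length B + length Xs \<Longrightarrow> set Xs \<subseteq> set p \<Longrightarrow> (B@Xs) ! k \<in> set p"
  using setB by (auto simp: nth_append)

definition Hyp :: "nat list \<Rightarrow> nat list \<Rightarrow> bool" where
  "Hyp X1 X2 \<equiv> \<forall>i\<le>j. \<forall>r<n. Init (sig i) r X1 X2 \<and> Init (sig i) r X2 X1"

lemma Hyp_sym: "Hyp X1 X2 = Hyp X2 X1" unfolding Hyp_def by blast

definition InvP :: "nat \<Rightarrow> nat \<Rightarrow> nat list \<Rightarrow> nat list \<Rightarrow> nat \<Rightarrow> nat \<Rightarrow> bool" where
  "InvP i r X1 X2 a d \<equiv> a < length B + length X1 \<and> d < length B + length X2 \<and> (B@X1)!a = (B@X2)!d \<and> r \<le> n \<and>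
    ((a = d \<and> a < length B) \<or>
     (length B \<le> a \<and> length B \<le> d \<and> (i = 0 \<or> Win (sig (i-1)) r X1 X2 (a - length B) (d - length B))) \<or>
     (i \<le> 1 \<and> d < length B \<and> d < a \<and> r \<le> d div length p) \<or>
     (i = 0 \<and> a < length B \<and> a < d))"


lemma sd_refl: "sd a a' a a'" unfolding sd_def by simp

lemma Inv_sync: "a' < length B \<Longrightarrow> r \<le> n \<Longrightarrow> InvP i r X1 X2 a' a'"
  unfolding InvP_def by (auto simp: nth_append)

lemma Inv_suf: "length B \<le> a' \<Longrightarrow> length B \<le> d' \<Longrightarrow> r \<le> n \<Longrightarrow>
   Win (sig (i-1)) r X1 X2 (a' - length B) (d' - length B) \<Longrightarrow> InvP i r X1 X2 a' d'"
  unfolding InvP_def using Win_base[of "sig (i-1)" r X1 X2 "a' - length B" "d' - length B"]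
  by (auto simp: nth_append)

lemma Inv_suf0: "length B \<le> a' \<Longrightarrow> length B \<le> d' \<Longrightarrow> r \<le> n \<Longrightarrow> a' < length B + length X1 \<Longrightarrow>
   d' < length B + length X2 \<Longrightarrow> (B@X1)!a' = (B@X2)!d' \<Longrightarrow> InvP 0 r X1 X2 a' d'"
  unfolding InvP_def by auto

lemma Inv_mix: "i \<le> 1 \<Longrightarrow> d' < length B \<Longrightarrow> d' < a' \<Longrightarrow> a' < length B + length X1 \<Longrightarrow>
   (B@X1)!a' = B!d' \<Longrightarrow> r \<le> d' div length p \<Longrightarrow> r \<le> n \<Longrightarrow> InvP i r X1 X2 a' d'"
  unfolding InvP_def by (auto simp: nth_append)

lemma Inv_rm: "a' < length B \<Longrightarrow> a' < d' \<Longrightarrow> d' < length B + length X2 \<Longrightarrow>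
   B!a' = (B@X2)!d' \<Longrightarrow> r \<le> n \<Longrightarrow> InvP 0 r X1 X2 a' d'"
  unfolding InvP_def by (auto simp: nth_append)

lemma escape:
  assumes "length B \<le> a'" "a' < length B + length X1" "set X1 \<subseteq> set p" "r < n" "i \<le> 1"
  shows "\<exists>e<length B. InvP i r X1 X2 a' e"
proof -
  have "(B@X1)!a' \<in> set p" using letter_in assms by blast
  then obtain e where e: "e < length B" "e div length p = n - 1" "B!e = (B@X1)!a'"
    using esc[of "n-1"] assms by auto
  have "InvP i r X1 X2 a' e" using assms e by (intro Inv_mix) auto
  then show ?thesis using e by blast
qed

lemma back1:
  assumes "d < length B" "1 \<le> d div length p" "c \<in> set p"
  shows "\<exists>e<d. e div length p = d div length p - 1 \<and> B!e = c"
proof -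
  have "d div length p < n" using nthB assms by blast
  then have "d div length p - 1 < n" by linarith
  then obtain e where e: "e < length B" "e div length p = d div length p - 1" "B!e = c"
    using esc[of "d div length p - 1" c] assms by blast
  have "e < d"
  proof (rule ccontr)
    assume "\<not> e < d" then have "d div length p \<le> e div length p" by (simp add: div_le_mono)
    then show False using e assms by auto
  qed
  then show ?thesis using e by blast
qed

lemma sd_shift: "sd (a - k) (a' - k) (d - k') (d' - k') \<Longrightarrow> k \<le> a \<Longrightarrow> k \<le> a' \<Longrightarrow> k' \<le> d \<Longrightarrow> k' \<le> d' \<Longrightarrow> sd a a' d d'"
  unfolding sd_def by auto

lemma resp_same:
  assumes Inv: "InvP i (Suc r) X1 X2 a d" and ij: "i \<le> Suc j" and H: "Hyp X1 X2"
    and S1: "set X1 \<subseteq> set p" and S2: "set X2 \<subseteq> set p"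
    and a': "a' < length B + length X1" and al: "alw (if i = 0 then BL else BF) a a'"
  shows "\<exists>d'<length B + length X2. sd a a' d d' \<and> InvP i r X1 X2 a' d'"
proof -
  let ?lb = "length B"
  have base: "a < ?lb + length X1" "d < ?lb + length X2" "(B@X1)!a = (B@X2)!d" "Suc r \<le> n"
    using Inv unfolding InvP_def by auto
  have rn: "r \<le> n" "r < n" using base by auto
  have fresh: "\<exists>d'<?lb + length X2. ?lb \<le> d' \<and> InvP (Suc i') r X1 X2 a' d'"
    if "i' \<le> j" "?lb \<le> a'" for i'
  proof -
    have "Init (sig i') r X1 X2" using H that rn unfolding Hyp_def by auto
    moreover have "a' - ?lb < length X1" using that(2) a' by linarith
    ultimately obtain q where q: "q < length X2" "Win (sig i') r X1 X2 (a' - ?lb) q"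
      unfolding Init_def by blast
    have "InvP (Suc i') r X1 X2 a' (?lb + q)" using q that rn by (intro Inv_suf) auto
    then show ?thesis using q by (intro exI[of _ "?lb + q"]) auto
  qed
  have escp: "\<exists>e<?lb. InvP i r X1 X2 a' e" if "?lb \<le> a'" "i \<le> 1"
    using escape[of a' X1 r i X2] that a' S1 rn by auto
  consider (sync) "a = d" "a < ?lb"
    | (suf) "?lb \<le> a" "?lb \<le> d" "i = 0 \<or> Win (sig (i-1)) (Suc r) X1 X2 (a - ?lb) (d - ?lb)"
    | (mix) "i \<le> 1" "d < ?lb" "d < a" "Suc r \<le> d div length p"
    | (rm) "i = 0" "a < ?lb" "a < d"
    using Inv unfolding InvP_def by blast
  then show ?thesis
  proof cases
    case sync
    show ?thesis
    proof (cases "a' < ?lb")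
      case True
      then show ?thesis using Inv_sync[of a' r i X1 X2] rn sync by (intro exI[of _ a']) (auto simp: sd_def)
    next
      case False
      then obtain i' where i': "i = Suc i'" using al sync by (cases i) auto
      obtain d' where "d' < ?lb + length X2" "?lb \<le> d'" "InvP i r X1 X2 a' d'"
        using fresh[of i'] False ij i' by auto
      then show ?thesis using sync False by (intro exI[of _ d']) (auto simp: sd_def)
    qed
  next
    case suf
    show ?thesis
    proof (cases "a' < ?lb")
      case True
      then show ?thesis using Inv_sync[of a' r i X1 X2] rn suf by (intro exI[of _ a']) (auto simp: sd_def)
    next
      case False
      have esc_case: ?thesis if h1: "a' < a" and h2: "i \<le> 1"
      proof -
        obtain e where "e < ?lb" "InvP i r X1 X2 a' e" using escp[OF _ h2] False by auto
        then show ?thesis using h1 suf by (intro exI[of _ e]) (auto simp: sd_def)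
      qed
      show ?thesis
      proof (cases i)
        case 0
        show ?thesis
        proof (cases "a' = a")
          case True
          then show ?thesis using Inv_suf0[of a d r X1 X2] suf base 0 by (intro exI[of _ d]) (auto simp: sd_def)
        next
          case False
          then show ?thesis using esc_case al 0 by auto
        qed
      next
        case (Suc i1)
        show ?thesis
        proof (cases i1)
          case 0
          show ?thesis
          proof (cases "a \<le> a'")
            case True
            have W: "Win [BR] (Suc r) X1 X2 (a - ?lb) (d - ?lb)" using suf Suc 0 by auto
            have "a' - ?lb < length X1" "alw BR (a - ?lb) (a' - ?lb)" using True False a' by auto
            then obtain q where q: "q < length X2" "sd (a - ?lb) (a' - ?lb) (d - ?lb) q" "Win [BR] r X1 X2 (a' - ?lb) q"
              using Win_same[OF W, of "a' - ?lb"] by blast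
            have "InvP i r X1 X2 a' (?lb + q)" using q Suc 0 rn False by (intro Inv_suf) auto
            moreover have "sd a a' d (?lb + q)" using sd_shift[of a ?lb a' d ?lb "?lb + q"] q suf False by auto
            ultimately show ?thesis using q by (intro exI[of _ "?lb + q"]) auto
          next
            case False2: False
            then show ?thesis using esc_case Suc 0 by auto
          qed
        next
          case (Suc k)
          have W: "Win (BF # sig k) (Suc r) X1 X2 (a - ?lb) (d - ?lb)" using suf \<open>i = Suc i1\<close> Suc by auto
          have "a' - ?lb < length X1" using False a' by auto
          then obtain q where q: "q < length X2" "sd (a - ?lb) (a' - ?lb) (d - ?lb) q" "Win (BF # sig k) r X1 X2 (a' - ?lb) q"
            using Win_same[OF W, of "a' - ?lb"] by auto
          have "InvP i r X1 X2 a' (?lb + q)" using q \<open>i = Suc i1\<close> Suc rn False by (intro Inv_suf) auto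
          moreover have "sd a a' d (?lb + q)" using sd_shift[of a ?lb a' d ?lb "?lb + q"] q suf False by auto
          ultimately show ?thesis using q by (intro exI[of _ "?lb + q"]) auto
        qed
      qed
    qed
  next
    case mix
    consider (l) "a' < d" | (m) "d \<le> a'" "a' < a" | (e) "a' = a" | (g) "a < a'" by linarith
    then show ?thesis
    proof cases
      case l
      then show ?thesis using Inv_sync[of a' r i X1 X2] rn mix by (intro exI[of _ a']) (auto simp: sd_def)
    next
      case m
      have "(B@X1)!a' \<in> set p" using letter_in a' S1 by blast
      then obtain e where e: "e < d" "e div length p = d div length p - 1" "B!e = (B@X1)!a'"
        using back1[of d] mix by auto
      have "InvP i r X1 X2 a' e" using mix e m a' rn by (intro Inv_mix) auto
      then show ?thesis using e m mix by (intro exI[of _ e]) (auto simp: sd_def)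
    next
      case e
      have "InvP i r X1 X2 a d" using mix base rn by (intro Inv_mix) (auto simp: nth_append)
      then show ?thesis using e base by (intro exI[of _ d]) (auto simp: sd_def)
    next
      case g
      then have i1: "i = 1" using mix al by (cases i) auto
      show ?thesis
      proof (cases "a' < ?lb")
        case True
        then show ?thesis using Inv_sync[of a' r i X1 X2] rn mix g by (intro exI[of _ a']) (auto simp: sd_def)
      next
        case False
        obtain d' where "d' < ?lb + length X2" "?lb \<le> d'" "InvP (Suc 0) r X1 X2 a' d'"
          using fresh[of 0] False by auto
        then show ?thesis using i1 mix g by (intro exI[of _ d']) (auto simp: sd_def)
      qed
    qed
  next
    case rm
    have "a' \<le> a" using al rm by auto
    show ?thesis
    proof (cases "a' = a")
      case True
      have "InvP 0 r X1 X2 a d" using rm base rn by (intro Inv_rm) (auto simp: nth_append)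
      then show ?thesis using True rm base by (intro exI[of _ d]) (auto simp: sd_def)
    next
      case False
      then show ?thesis using Inv_sync[of a' r i X1 X2] rn rm \<open>a' \<le> a\<close> by (intro exI[of _ a']) (auto simp: sd_def)
    qed
  qed
qed


lemma resp_sw:
  assumes Inv: "InvP (Suc i') (Suc r) X1 X2 a d" and ij: "Suc i' \<le> Suc j" and H: "Hyp X1 X2"
    and S1: "set X1 \<subseteq> set p" and S2: "set X2 \<subseteq> set p"
    and d': "d' < length B + length X2" and al: "alw (if i' = 0 then BL else BF) d d'"
  shows "\<exists>a'<length B + length X1. sd d d' a a' \<and> InvP i' r X2 X1 d' a'"
proof -
  let ?lb = "length B"
  have base: "a < ?lb + length X1" "d < ?lb + length X2" "(B@X1)!a = (B@X2)!d" "Suc r \<le> n"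
    using Inv unfolding InvP_def by auto
  have rn: "r \<le> n" "r < n" using base by auto
  have escp: "\<exists>e<?lb. InvP i' r X2 X1 d' e" if "?lb \<le> d'" "i' \<le> 1"
    using escape[of d' X2 r i' X1] that d' S2 rn by auto
  consider (sync) "a = d" "a < ?lb"
    | (suf) "?lb \<le> a" "?lb \<le> d" "Win (sig i') (Suc r) X1 X2 (a - ?lb) (d - ?lb)"
    | (mix) "i' = 0" "d < ?lb" "d < a"
    using Inv unfolding InvP_def by auto
  then show ?thesis
  proof cases
    case sync
    show ?thesis
    proof (cases "d' < ?lb")
      case True
      then show ?thesis using Inv_sync[of d' r i' X2 X1] rn sync by (intro exI[of _ d']) (auto simp: sd_def)
    next
      case False
      then obtain k where k: "i' = Suc k" using al sync by (cases i') auto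
      have "Init (sig k) r X2 X1" using H rn ij k unfolding Hyp_def by auto
      moreover have "d' - ?lb < length X2" using False d' by auto
      ultimately obtain q where q: "q < length X1" "Win (sig k) r X2 X1 (d' - ?lb) q"
        unfolding Init_def by blast
      have "InvP i' r X2 X1 d' (?lb + q)" using q k rn False by (intro Inv_suf) auto
      then show ?thesis using q sync False by (intro exI[of _ "?lb + q"]) (auto simp: sd_def)
    qed
  next
    case suf
    show ?thesis
    proof (cases "d' < ?lb")
      case True
      then show ?thesis using Inv_sync[of d' r i' X2 X1] rn suf by (intro exI[of _ d']) (auto simp: sd_def)
    next
      case False
      have dL: "d' - ?lb < length X2" using False d' by auto
      have esc_case: ?thesis if h1: "d' < d" and h2: "i' \<le> 1"
      proof -
        obtain e where "e < ?lb" "InvP i' r X2 X1 d' e" using escp[OF _ h2] False by auto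
        then show ?thesis using h1 suf by (intro exI[of _ e]) (auto simp: sd_def)
      qed
      show ?thesis
      proof (cases i')
        case 0
        show ?thesis
        proof (cases "d' = d")
          case True
          then show ?thesis using Inv_suf0[of d a r X2 X1] suf base 0 by (intro exI[of _ a]) (auto simp: sd_def)
        next
          case False
          then show ?thesis using esc_case al 0 by auto
        qed
      next
        case (Suc i1)
        show ?thesis
        proof (cases i1)
          case 0
          show ?thesis
          proof (cases "d \<le> d'")
            case True
            have W: "Win (BF # BR # []) (Suc r) X1 X2 (a - ?lb) (d - ?lb)" using suf Suc 0 by auto
            have "alw BR (d - ?lb) (d' - ?lb)" using True by auto
            then obtain q where q: "q < length X1" "sd (d - ?lb) (d' - ?lb) (a - ?lb) q" "Win [BR] r X2 X1 (d' - ?lb) q"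
              using Win_sw[OF W, of "d' - ?lb"] dL by blast
            have "InvP i' r X2 X1 d' (?lb + q)" using q Suc 0 rn False by (intro Inv_suf) auto
            moreover have "sd d d' a (?lb + q)" using sd_shift[of d ?lb d' a ?lb "?lb + q"] q suf False by auto
            ultimately show ?thesis using q by (intro exI[of _ "?lb + q"]) auto
          next
            case False2: False
            then show ?thesis using esc_case Suc 0 by auto
          qed
        next
          case (Suc k)
          have W: "Win (BF # BF # sig k) (Suc r) X1 X2 (a - ?lb) (d - ?lb)" using suf \<open>i' = Suc i1\<close> Suc by auto
          obtain q where q: "q < length X1" "sd (d - ?lb) (d' - ?lb) (a - ?lb) q" "Win (BF # sig k) r X2 X1 (d' - ?lb) q"
            using Win_sw[OF W, of "d' - ?lb"] dL by auto
          have "InvP i' r X2 X1 d' (?lb + q)" using q \<open>i' = Suc i1\<close> Suc rn False by (intro Inv_suf) auto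
          moreover have "sd d d' a (?lb + q)" using sd_shift[of d ?lb d' a ?lb "?lb + q"] q suf False by auto
          ultimately show ?thesis using q by (intro exI[of _ "?lb + q"]) auto
        qed
      qed
    qed
  next
    case mix
    have "d' \<le> d" using al mix by auto
    show ?thesis
    proof (cases "d' = d")
      case True
      have "InvP 0 r X2 X1 d a" using mix base rn by (intro Inv_rm) (auto simp: nth_append)
      then show ?thesis using True mix base by (intro exI[of _ a]) (auto simp: sd_def)
    next
      case False
      then show ?thesis using Inv_sync[of d' r i' X2 X1] rn mix \<open>d' \<le> d\<close> by (intro exI[of _ d']) (auto simp: sd_def)
    qed
  qed
qed

lemma Inv_Win:
  "InvP i r X1 X2 a d \<Longrightarrow> i \<le> Suc j \<Longrightarrow> Hyp X1 X2 \<Longrightarrow> set X1 \<subseteq> set p \<Longrightarrow> set X2 \<subseteq> set p \<Longrightarrow>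
   Win (rho i) r (B@X1) (B@X2) a d"
proof (induction r arbitrary: i X1 X2 a d)
  case 0
  then show ?case unfolding InvP_def by auto
next
  case (Suc r)
  have base: "a < length (B@X1)" "d < length (B@X2)" "(B@X1)!a = (B@X2)!d"
    using Suc.prems unfolding InvP_def by auto
  show ?case
  proof (cases i)
    case 0
    show ?thesis unfolding 0 replicate_0 append.simps
    proof (rule Win_SucI[OF base])
      fix a' assume a': "a' < length (B@X1)" "alw BL a a'"
      have "alw (if i = 0 then BL else BF) a a'" using 0 a' by simp
      then obtain d' where "d' < length B + length X2" "sd a a' d d'" "InvP i r X1 X2 a' d'"
        using resp_same[OF Suc.prems(1) Suc.prems(2-5)] a' by auto
      then show "\<exists>b'<length (B@X2). sd a a' d b' \<and> Win [BL] r (B@X1) (B@X2) a' b'"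
        using Suc.IH[of i X1 X2 a' d'] Suc.prems 0 by auto
    qed auto
  next
    case (Suc i')
    have rs: "rho i = BF # rho i'" using Suc by simp
    show ?thesis unfolding rs
    proof (rule Win_SucI[OF base])
      fix a' assume a': "a' < length (B@X1)" "alw BF a a'"
      have "alw (if i = 0 then BL else BF) a a'" using Suc a' by simp
      then obtain d' where "d' < length B + length X2" "sd a a' d d'" "InvP i r X1 X2 a' d'"
        using resp_same[OF Suc.prems(1) Suc.prems(2-5)] a' by auto
      then show "\<exists>b'<length (B@X2). sd a a' d b' \<and> Win (BF # rho i') r (B@X1) (B@X2) a' b'"
        using Suc.IH[of i X1 X2 a' d'] Suc.prems rs by auto
    next
      fix T' \<rho>' d' assume h: "rho i' = T' # \<rho>'" "d' < length (B@X2)" "alw T' d d'"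
      have "T' = (if i' = 0 then BL else BF)" using h(1) by (cases i') auto
      then obtain a' where a': "a' < length B + length X1" "sd d d' a a'" "InvP i' r X2 X1 d' a'"
        using resp_sw[of i' r X1 X2 a d d'] Suc.prems Suc h by auto
      have "Win (rho i') r (B@X2) (B@X1) d' a'"
        using Suc.IH[of i' X2 X1 d' a'] a' Suc.prems Suc Hyp_sym by auto
      then show "\<exists>a'<length (B@X1). sd d d' a a' \<and> Win (rho i') r (B@X2) (B@X1) d' a'"
        using a' by auto
    qed
  qed
qed

lemma PL_Init:
  assumes H: "Hyp X1 X2" and S1: "set X1 \<subseteq> set p" and S2: "set X2 \<subseteq> set p"
    and i: "i \<le> Suc j" and r: "r < n"
  shows "Init (rho i) r (B@X1) (B@X2)"
  unfolding Init_def
proof (intro allI impI)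
  fix a assume a: "a < length (B@X1)"
  let ?lb = "length B"
  have "\<exists>d<length (B@X2). InvP i r X1 X2 a d"
  proof (cases "a < ?lb")
    case True
    then show ?thesis using Inv_sync[of a r i X1 X2] r by (intro exI[of _ a]) auto
  next
    case False
    show ?thesis
    proof (cases i)
      case 0
      then obtain e where "e < ?lb" "InvP i r X1 X2 a e" using escape[of a X1 r i X2] False a S1 r by auto
      then show ?thesis by (intro exI[of _ e]) auto
    next
      case (Suc k)
      have "Init (sig k) r X1 X2" using H r i Suc unfolding Hyp_def by auto
      moreover have "a - ?lb < length X1" using False a by auto
      ultimately obtain q where q: "q < length X2" "Win (sig k) r X1 X2 (a - ?lb) q"
        unfolding Init_def by blast
      have "InvP i r X1 X2 a (?lb + q)" using q Suc r False by (intro Inv_suf) auto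
      then show ?thesis using q by (intro exI[of _ "?lb + q"]) auto
    qed
  qed
  then show "\<exists>d<length (B@X2). Win (rho i) r (B@X1) (B@X2) a d"
    using Inv_Win assms by blast
qed

end

lemma PL:
  assumes H: "\<forall>i\<le>j. \<forall>r<n. Init (sig i) r X1 X2 \<and> Init (sig i) r X2 X1"
    and S: "set X1 \<subseteq> set p" "set X2 \<subseteq> set p"
  shows "\<forall>i\<le>Suc j. \<forall>r<n. Init (rho i) r (concat (replicate n p) @ X1) (concat (replicate n p) @ X2) \<and>
                            Init (rho i) r (concat (replicate n p) @ X2) (concat (replicate n p) @ X1)"
  using PLc.PL_Init[of n j X1 X2 p] PLc.PL_Init[of n j X2 X1 p] assms
  unfolding PLc.Hyp_def PLc.B_def by blast




definition u2 :: "nat \<Rightarrow> nat list" where "u2 n = 0 # concat (replicate (2*n) [1,0])"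
definition v2 :: "nat \<Rightarrow> nat list" where "v2 n = concat (replicate (2*n) [1,0])"

lemma uw2: "uw 2 n = u2 n" and vw2: "vw 2 n = v2 n"
  by (simp_all add: numeral_2_eq_2 u2_def v2_def)

lemma len_v2: "length (v2 n) = 4*n" unfolding v2_def by (simp add: length_concat sum_list_replicate)
lemma len_u2: "length (u2 n) = Suc (4*n)" unfolding u2_def by (simp add: length_concat sum_list_replicate)

lemma nth_v2: "i < 4*n \<Longrightarrow> v2 n ! i = (if even i then 1 else 0)"
proof -
  assume i: "i < 4*n"
  have "v2 n ! i = [1,0::nat] ! (i mod 2)" unfolding v2_def using nth_concat_rep[of i "2*n" "[1,0::nat]"] i by (simp add: numeral_2_eq_2)
  moreover have "i mod 2 = 0 \<or> i mod 2 = 1" by auto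
  ultimately show ?thesis by (auto simp: even_iff_mod_2_eq_zero numeral_2_eq_2)
qed

lemma nth_u2: "i \<le> 4*n \<Longrightarrow> u2 n ! i = (if even i then 0 else 1)"
proof (cases i)
  case 0 then show ?thesis by (simp add: u2_def)
next
  case (Suc k)
  assume "i \<le> 4*n"
  then have "k < 4*n" using Suc by simp
  moreover have "u2 n ! i = v2 n ! k" using Suc by (simp add: u2_def v2_def)
  ultimately show ?thesis using Suc nth_v2[of k n] by simp
qed

lemma let2: "i \<le> 4*n \<Longrightarrow> j < 4*n \<Longrightarrow> (i = j+1 \<or> i+1 = j) \<Longrightarrow> u2 n ! i = v2 n ! j"
  using nth_u2 nth_v2 by auto

lemma L1: "j < 4*n \<Longrightarrow> i = j+1 \<Longrightarrow> Win [BR] r (u2 n) (v2 n) i j"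
proof (induction r arbitrary: i j)
  case 0 then show ?case using let2[of i n j] len_u2 len_v2 by auto
next
  case (Suc r)
  show ?case
  proof (rule Win_SucI)
    show "i < length (u2 n)" "j < length (v2 n)" "u2 n ! i = v2 n ! j"
      using Suc.prems let2[of i n j] len_u2 len_v2 by auto
  next
    fix a' assume a': "a' < length (u2 n)" "alw BR i a'"
    then have "a' - 1 < 4*n" "a' = (a' - 1) + 1" using Suc.prems len_u2 by auto
    then show "\<exists>b'<length (v2 n). sd i a' j b' \<and> Win [BR] r (u2 n) (v2 n) a' b'"
      using Suc.IH[where i=a' and j="a' - 1"] Suc.prems len_v2 by (intro exI[of _ "a' - 1"]) (auto simp: sd_def)
  qed auto
qed

lemma L2: "j < 4*n \<Longrightarrow> i \<le> 4*n \<Longrightarrow> (i = j+1 \<or> i+1 = j) \<Longrightarrow> Win [BR] r (v2 n) (u2 n) j i"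
proof (induction r arbitrary: i j)
  case 0 then show ?case using let2[of i n j] len_u2 len_v2 by auto
next
  case (Suc r)
  show ?case
  proof (rule Win_SucI)
    show "j < length (v2 n)" "i < length (u2 n)" "v2 n ! j = u2 n ! i"
      using Suc.prems let2[of i n j] len_u2 len_v2 by auto
  next
    fix b' assume b': "b' < length (v2 n)" "alw BR j b'"
    define a' where "a' = (if i = j+1 then b'+1 else b'-1)"
    have "a' \<le> 4*n" "a' = b'+1 \<or> a'+1 = b'" "sd j b' i a'"
      using b' Suc.prems len_v2 unfolding a'_def sd_def by auto
    then show "\<exists>a''<length (u2 n). sd j b' i a'' \<and> Win [BR] r (v2 n) (u2 n) b' a''"
      using Suc.IH[where i=a' and j=b'] b' len_v2 len_u2 by (intro exI[of _ a']) auto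
  qed auto
qed

lemma L3: "j < 4*n \<Longrightarrow> Win [BF,BR] r (v2 n) (u2 n) j (j+1)"
proof (induction r arbitrary: j)
  case 0 then show ?case using let2[of "j+1" n j] len_u2 len_v2 by auto
next
  case (Suc r)
  show ?case
  proof (rule Win_SucI)
    show "j < length (v2 n)" "j+1 < length (u2 n)" "v2 n ! j = u2 n ! (j+1)"
      using Suc.prems let2[of "j+1" n j] len_u2 len_v2 by auto
  next
    fix b' assume b': "b' < length (v2 n)" "alw BF j b'"
    then show "\<exists>a'<length (u2 n). sd j b' (j+1) a' \<and> Win [BF,BR] r (v2 n) (u2 n) b' a'"
      using Suc.IH[of b'] len_v2 len_u2 by (intro exI[of _ "b'+1"]) (auto simp: sd_def)
  next
    fix T' \<rho>' a' assume h: "[BR] = T' # \<rho>'" "a' < length (u2 n)" "alw T' (j+1) a'"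
    then have "a' - 1 < 4*n" "a' = (a'-1) + 1" "j \<le> a' - 1" using len_u2 by auto
    then show "\<exists>b'<length (v2 n). sd (j+1) a' j b' \<and> Win [BR] r (u2 n) (v2 n) a' b'"
      using L1[of "a'-1" n a' r] len_v2 by (intro exI[of _ "a' - 1"]) (auto simp: sd_def)
  qed
qed

definition IF :: "nat \<Rightarrow> nat \<Rightarrow> nat \<Rightarrow> nat \<Rightarrow> bool" where
  "IF n r i j \<equiv> i \<le> 4*n \<and> j < 4*n \<and> r < n \<and> ((j+1 = i \<and> 2*r < i) \<or> (j = i+1 \<and> i + 2*r + 2 \<le> 4*n))"

lemma IF_resp: "IF n (Suc r) i j \<Longrightarrow> i2 \<le> 4*n \<Longrightarrow> \<exists>j2. sd i i2 j j2 \<and> IF n r i2 j2"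
proof -
  assume I: "IF n (Suc r) i j" and i2: "i2 \<le> 4*n"
  consider (id) "j+1 = i" "2*Suc r < i" | (sh) "j = i+1" "i + 2*Suc r + 2 \<le> 4*n"
    using I unfolding IF_def by blast
  then show ?thesis
  proof cases
    case id
    consider "i2 = i" | "i2 < i" "2*r < i2" | "i2 < i" "i2 \<le> 2*r" | "i < i2" by linarith
    then show ?thesis
    proof cases
      case 1 then show ?thesis using I id unfolding IF_def sd_def by (intro exI[of _ j]) auto
    next
      case 2 then show ?thesis using I id i2 unfolding IF_def sd_def by (intro exI[of _ "i2 - 1"]) auto
    next
      case 3 then show ?thesis using I id i2 unfolding IF_def sd_def by (intro exI[of _ "i2 + 1"]) auto
    next
      case 4 then show ?thesis using I id i2 unfolding IF_def sd_def by (intro exI[of _ "i2 - 1"]) auto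
    qed
  next
    case sh
    consider "i2 = i" | "i2 < i" | "i < i2" "i2 + 2*r + 2 \<le> 4*n" | "i < i2" "\<not> i2 + 2*r + 2 \<le> 4*n" by linarith
    then show ?thesis
    proof cases
      case 1 then show ?thesis using I sh unfolding IF_def sd_def by (intro exI[of _ j]) auto
    next
      case 2 then show ?thesis using I sh i2 unfolding IF_def sd_def by (intro exI[of _ "i2 + 1"]) auto
    next
      case 3 then show ?thesis using I sh i2 unfolding IF_def sd_def by (intro exI[of _ "i2 + 1"]) auto
    next
      case 4 then show ?thesis using I sh i2 unfolding IF_def sd_def by (intro exI[of _ "i2 - 1"]) auto
    qed
  qed
qed

lemma L4: "IF n r i j \<Longrightarrow> Win [BF,BR] r (u2 n) (v2 n) i j"
proof (induction r arbitrary: i j)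
  case 0 then show ?case using let2[of i n j] len_u2 len_v2 unfolding IF_def by auto
next
  case (Suc r)
  have b: "i \<le> 4*n" "j < 4*n" "i = j+1 \<or> i+1 = j" using Suc.prems unfolding IF_def by auto
  show ?case
  proof (rule Win_SucI)
    show "i < length (u2 n)" "j < length (v2 n)" "u2 n ! i = v2 n ! j"
      using b let2[of i n j] len_u2 len_v2 by auto
  next
    fix a' assume a': "a' < length (u2 n)" "alw BF i a'"
    then obtain j2 where "sd i a' j j2" "IF n r a' j2" using IF_resp[OF Suc.prems, of a'] len_u2 by auto
    then show "\<exists>b'<length (v2 n). sd i a' j b' \<and> Win [BF,BR] r (u2 n) (v2 n) a' b'"
      using Suc.IH[where i=a' and j=j2] len_v2 unfolding IF_def by auto
  next
    fix T' \<rho>' b' assume h: "[BR] = T' # \<rho>'" "b' < length (v2 n)" "alw T' j b'"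
    define a' where "a' = (if i = j+1 then b'+1 else b'-1)"
    have "a' \<le> 4*n" "a' = b'+1 \<or> a'+1 = b'" "sd j b' i a'"
      using h b len_v2 unfolding a'_def sd_def by auto
    then show "\<exists>a''<length (u2 n). sd j b' i a'' \<and> Win [BR] r (v2 n) (u2 n) b' a''"
      using L2[of b' n a' r] h len_v2 len_u2 by (intro exI[of _ a']) auto
  qed
qed

lemma base2: "\<forall>i\<le>1. \<forall>r<n. Init (sig i) r (uw 2 n) (vw 2 n) \<and> Init (sig i) r (vw 2 n) (uw 2 n)"
proof (intro allI impI)
  fix i r :: nat assume i: "i \<le> 1" and r: "r < n"
  have A: "Init [BF,BR] r (u2 n) (v2 n)"
    unfolding Init_def
  proof (intro allI impI)
    fix a assume "a < length (u2 n)"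
    then have a: "a \<le> 4*n" using len_u2 by auto
    define b where "b = (if 2*r < a then a - 1 else a + 1)"
    have I: "IF n r a b" using a r unfolding b_def IF_def by auto
    then have "b < length (v2 n)" using len_v2 unfolding IF_def by auto
    then show "\<exists>b<length (v2 n). Win [BF,BR] r (u2 n) (v2 n) a b"
      using L4[OF I] by blast
  qed
  have B: "Init [BF,BR] r (v2 n) (u2 n)"
    unfolding Init_def using L3 len_v2 len_u2 by (metis Suc_eq_plus1 Suc_less_eq)
  have w: "weaker [BR] [BF,BR]" unfolding weaker_def by auto
  have A0: "Init [BR] r (u2 n) (v2 n)" using A Win_mono[OF _ le_refl w] unfolding Init_def by blast
  have B0: "Init [BR] r (v2 n) (u2 n)" using B Win_mono[OF _ le_refl w] unfolding Init_def by blast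
  show "Init (sig i) r (uw 2 n) (vw 2 n) \<and> Init (sig i) r (vw 2 n) (uw 2 n)"
    using i A B A0 B0 unfolding uw2 vw2 by (cases i) auto
qed




lemma map_mir_rho: "map mir (rho i) = sig i" and map_mir_sig: "map mir (sig i) = rho i"
  by (induction i) auto

lemma uw_odd: "odd m \<Longrightarrow> 3 \<le> m \<Longrightarrow> uw m n = concat (replicate n [0..<m]) @ uw (m-1) n"
  and vw_odd: "odd m \<Longrightarrow> 3 \<le> m \<Longrightarrow> vw m n = concat (replicate n [0..<m]) @ vw (m-1) n"
proof -
  assume "odd m" "3 \<le> m"
  then obtain k where "m = Suc (Suc (Suc k))" by (intro that[of "m - 3"]) arith
  then show "uw m n = concat (replicate n [0..<m]) @ uw (m-1) n"
       "vw m n = concat (replicate n [0..<m]) @ vw (m-1) n" using \<open>odd m\<close> by auto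
qed

lemma uw_even: "even m \<Longrightarrow> 3 \<le> m \<Longrightarrow> uw m n = uw (m-1) n @ concat (replicate n (rev [0..<m]))"
  and vw_even: "even m \<Longrightarrow> 3 \<le> m \<Longrightarrow> vw m n = vw (m-1) n @ concat (replicate n (rev [0..<m]))"
proof -
  assume "even m" "3 \<le> m"
  then obtain k where "m = Suc (Suc (Suc k))" by (intro that[of "m - 3"]) arith
  then show "uw m n = uw (m-1) n @ concat (replicate n (rev [0..<m]))"
       "vw m n = vw (m-1) n @ concat (replicate n (rev [0..<m]))" using \<open>even m\<close> by auto
qed

lemma set_uvw: "set (uw m n) \<subseteq> {..<m} \<and> set (vw m n) \<subseteq> {..<m}"
  by (induction m n rule: uw.induct) (auto simp: subset_iff less_Suc_eq)

definition tl_of :: "nat \<Rightarrow> bt" where "tl_of m = (if even m then BR else BL)"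

definition Q :: "nat \<Rightarrow> nat \<Rightarrow> bool" where
  "Q m n \<equiv> \<forall>i\<le>m-1. \<forall>r<n. Init (replicate i BF @ [tl_of m]) r (uw m n) (vw m n) \<and>
                             Init (replicate i BF @ [tl_of m]) r (vw m n) (uw m n)"

lemma Q2: "Q 2 n" using base2[of n] unfolding Q_def tl_of_def by auto

lemma rev_concat_rep: "rev (concat (replicate n (rev xs))) = concat (replicate n xs)"
  by (simp add: rev_concat)

lemma Q_step: assumes "Q (m-1) n" "3 \<le> m" shows "Q m n"
proof (cases "odd m")
  case True
  have H: "\<forall>i\<le>m-2. \<forall>r<n. Init (sig i) r (uw (m-1) n) (vw (m-1) n) \<and> Init (sig i) r (vw (m-1) n) (uw (m-1) n)"
    using assms True unfolding Q_def tl_of_def by (auto simp: diff_Suc_1)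
  have S: "set (uw (m-1) n) \<subseteq> set [0..<m]" "set (vw (m-1) n) \<subseteq> set [0..<m]"
    using set_uvw[of "m-1" n] by auto
  have "\<forall>i\<le>Suc (m-2). \<forall>r<n. Init (rho i) r (concat (replicate n [0..<m]) @ uw (m-1) n) (concat (replicate n [0..<m]) @ vw (m-1) n) \<and>
                            Init (rho i) r (concat (replicate n [0..<m]) @ vw (m-1) n) (concat (replicate n [0..<m]) @ uw (m-1) n)"
    by (rule PL[OF H S])
  moreover have "Suc (m-2) = m - 1" using assms by auto
  ultimately show ?thesis unfolding Q_def tl_of_def using True assms uw_odd vw_odd by auto
next
  case False
  let ?x = "rev (uw (m-1) n)" and ?y = "rev (vw (m-1) n)"
  have H0: "\<forall>i\<le>m-2. \<forall>r<n. Init (rho i) r (uw (m-1) n) (vw (m-1) n) \<and> Init (rho i) r (vw (m-1) n) (uw (m-1) n)"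
    using assms False unfolding Q_def tl_of_def by (auto simp: diff_Suc_1)
  have H: "\<forall>i\<le>m-2. \<forall>r<n. Init (sig i) r ?x ?y \<and> Init (sig i) r ?y ?x"
    using H0 Init_rev map_mir_rho by metis
  have S: "set ?x \<subseteq> set [0..<m]" "set ?y \<subseteq> set [0..<m]"
    using set_uvw[of "m-1" n] by auto
  have P: "\<forall>i\<le>Suc (m-2). \<forall>r<n. Init (rho i) r (concat (replicate n [0..<m]) @ ?x) (concat (replicate n [0..<m]) @ ?y) \<and>
                            Init (rho i) r (concat (replicate n [0..<m]) @ ?y) (concat (replicate n [0..<m]) @ ?x)"
    by (rule PL[OF H S])
  have e1: "concat (replicate n [0..<m]) @ ?x = rev (uw m n)" "concat (replicate n [0..<m]) @ ?y = rev (vw m n)"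
    using uw_even[of m n] vw_even[of m n] False assms rev_concat_rep[of n "[0..<m]"] by auto
  have "Suc (m-2) = m - 1" using assms by auto
  then have P2: "\<forall>i\<le>m-1. \<forall>r<n. Init (rho i) r (rev (uw m n)) (rev (vw m n)) \<and> Init (rho i) r (rev (vw m n)) (rev (uw m n))"
    using P e1 by metis
  have "\<forall>i\<le>m-1. \<forall>r<n. Init (sig i) r (uw m n) (vw m n) \<and> Init (sig i) r (vw m n) (uw m n)"
    using P2 Init_rev map_mir_rho rev_rev_ident by metis
  then show ?thesis unfolding Q_def tl_of_def using False by auto
qed

lemma Q_all: "2 \<le> m \<Longrightarrow> Q m n"
proof (induction m rule: less_induct)
  case (less m)
  show ?case
  proof (cases "m = 2")
    case True then show ?thesis using Q2 by simp
  next
    case False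
    then have "3 \<le> m" using less by auto
    then show ?thesis using less Q_step[of m n] by auto
  qed
qed




definition W :: "nat \<Rightarrow> nat \<Rightarrow> nat list \<Rightarrow> nat list \<Rightarrow> nat \<Rightarrow> nat \<Rightarrow> bool" where
  "W k r A B a b \<equiv> Win (replicate k BF) r A B a b"

lemma W_base: "W k r A B a b \<Longrightarrow> a < length A \<and> b < length B \<and> A!a = B!b"
  unfolding W_def using Win_base by blast

lemma W_mono: "W k r A B a b \<Longrightarrow> k' \<le> k \<Longrightarrow> r' \<le> r \<Longrightarrow> W k' r' A B a b"
  unfolding W_def by (rule Win_mono) (auto simp: weaker_def)

lemma W_same: "W k r A B a b \<Longrightarrow> 0 < r \<Longrightarrow> 1 \<le> k \<Longrightarrow> a' < length A \<Longrightarrow>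
   \<exists>b'<length B. sd a a' b b' \<and> W k (r-1) A B a' b'"
proof -
  assume h: "W k r A B a b" "0 < r" "1 \<le> k" "a' < length A"
  obtain r0 where r0: "r = Suc r0" using h by (cases r) auto
  have rep: "replicate k BF = BF # replicate (k-1) BF" using h by (cases k) auto
  show ?thesis using Win_same[of BF "replicate (k-1) BF" r0 A B a b a'] h r0 rep unfolding W_def by auto
qed

lemma W_sw: "W k r A B a b \<Longrightarrow> 0 < r \<Longrightarrow> 2 \<le> k \<Longrightarrow> b' < length B \<Longrightarrow>
   \<exists>a'<length A. sd b b' a a' \<and> W (k-1) (r-1) B A b' a'"
proof -
  assume h: "W k r A B a b" "0 < r" "2 \<le> k" "b' < length B"
  obtain r0 where r0: "r = Suc r0" using h by (cases r) auto
  obtain k2 where k2: "k = Suc (Suc k2)" using h by (metis add_2_eq_Suc le_Suc_ex)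
  show ?thesis using Win_sw[of BF BF "replicate k2 BF" r0 A B a b b'] h r0 k2 unfolding W_def by auto
qed

definition IA :: "nat \<Rightarrow> nat \<Rightarrow> nat list \<Rightarrow> nat list \<Rightarrow> bool" where
  "IA k r A B \<equiv> 0 < r \<longrightarrow> (\<forall>i<length A. \<exists>j<length B. W k (r-1) A B i j) \<and>
                          (2 \<le> k \<longrightarrow> (\<forall>j<length B. \<exists>i<length A. W (k-1) (r-1) B A j i))"

definition Rel :: "nat \<Rightarrow> nat \<Rightarrow> nat list \<Rightarrow> nat list \<Rightarrow> var set \<Rightarrow> (var \<Rightarrow> nat) \<Rightarrow> (var \<Rightarrow> nat) \<Rightarrow> bool" where
  "Rel k r A B D s t \<equiv> 1 \<le> k \<and>
   ((D = {} \<and> IA k r A B) \<or>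
    (\<exists>z. D = {z} \<and> W k r A B (s z) (t z) \<and>
       (\<exists>k' r'. r \<le> r' \<and> ((IA k' r' A B \<and> k \<le> k') \<or> (IA k' r' B A \<and> Suc k \<le> k')))) \<or>
    (\<exists>z w. z \<noteq> w \<and> D = {z,w} \<and> W k r A B (s z) (t z) \<and> sd (s w) (s z) (t w) (t z) \<and>
       (\<exists>k' r'. r \<le> r' \<and> ((W k' r' A B (s w) (t w) \<and> k \<le> k') \<or> (W k' r' B A (t w) (s w) \<and> Suc k \<le> k')))))"

lemma Rel_oneI: "1 \<le> k \<Longrightarrow> W k r A B (s z) (t z) \<Longrightarrow> r \<le> r' \<Longrightarrow>
   (IA k' r' A B \<and> k \<le> k') \<or> (IA k' r' B A \<and> Suc k \<le> k') \<Longrightarrow> Rel k r A B {z} s t"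
  unfolding Rel_def by blast

lemma Rel_twoI: "1 \<le> k \<Longrightarrow> z \<noteq> w \<Longrightarrow> W k r A B (s z) (t z) \<Longrightarrow> sd (s w) (s z) (t w) (t z) \<Longrightarrow> r \<le> r' \<Longrightarrow>
   (W k' r' A B (s w) (t w) \<and> k \<le> k') \<or> (W k' r' B A (t w) (s w) \<and> Suc k \<le> k') \<Longrightarrow> Rel k r A B {z,w} s t"
  unfolding Rel_def by blast

lemma var2: "(z1::var) \<noteq> w1 \<Longrightarrow> z = z1 \<or> z = w1"
  by (cases z; cases z1; cases w1) auto

lemma sd_sym: "sd a a' b b' = sd b b' a a'" unfolding sd_def by auto

lemma Rel_same:
  assumes R: "Rel k r A B D s t" and r: "0 < r" and i: "i < length A"
  shows "\<exists>j<length B. Rel k (r-1) A B (insert z D) (s(z:=i)) (t(z:=j))"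
proof -
  have k: "1 \<le> k" using R unfolding Rel_def by auto
  consider (e) "D = {}" "IA k r A B"
    | (one) z0 k' r' where "D = {z0}" "W k r A B (s z0) (t z0)" "r \<le> r'" "(IA k' r' A B \<and> k \<le> k') \<or> (IA k' r' B A \<and> Suc k \<le> k')"
    | (two) z1 w1 k' r' where "z1 \<noteq> w1" "D = {z1,w1}" "W k r A B (s z1) (t z1)" "sd (s w1) (s z1) (t w1) (t z1)"
        "r \<le> r'" "(W k' r' A B (s w1) (t w1) \<and> k \<le> k') \<or> (W k' r' B A (t w1) (s w1) \<and> Suc k \<le> k')"
    using R unfolding Rel_def by blast
  then show ?thesis
  proof cases
    case e
    then obtain j where j: "j < length B" "W k (r-1) A B i j" using i r unfolding IA_def by auto
    have "Rel k (r-1) A B {z} (s(z:=i)) (t(z:=j))"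
      using k j e by (intro Rel_oneI[where k'=k and r'=r]) auto
    then show ?thesis using j e by auto
  next
    case one
    show ?thesis
    proof (cases "z = z0")
      case True
      have "\<exists>j<length B. W k (r-1) A B i j"
      proof -
        from one(4) show ?thesis
        proof
          assume h: "IA k' r' A B \<and> k \<le> k'"
          then obtain j where "j < length B" "W k' (r'-1) A B i j" using i r one(3) unfolding IA_def by auto
          then show ?thesis using W_mono[of k' "r'-1" A B i j k "r-1"] h one(3) by auto
        next
          assume h: "IA k' r' B A \<and> Suc k \<le> k'"
          then obtain j where "j < length B" "W (k'-1) (r'-1) A B i j" using i r one(3) k unfolding IA_def by auto
          then show ?thesis using W_mono[of "k'-1" "r'-1" A B i j k "r-1"] h one(3) by auto
        qed
      qed
      then obtain j where j: "j < length B" "W k (r-1) A B i j" by blast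
      have "Rel k (r-1) A B {z0} (s(z:=i)) (t(z:=j))"
        using k j one True by (intro Rel_oneI[where k'=k' and r'=r']) auto
      then show ?thesis using j one True by auto
    next
      case False
      obtain j where j: "j < length B" "sd (s z0) i (t z0) j" "W k (r-1) A B i j"
        using W_same[OF one(2) r k i] by blast
      have "Rel k (r-1) A B {z, z0} (s(z:=i)) (t(z:=j))"
        using k j one False by (intro Rel_twoI[where k'=k and r'=r]) auto
      then show ?thesis using j one by (auto simp: insert_commute)
    qed
  next
    case two
    show ?thesis
    proof (cases "z = w1")
      case True
      obtain j where j: "j < length B" "sd (s z1) i (t z1) j" "W k (r-1) A B i j"
        using W_same[OF two(3) r k i] by blast
      have "Rel k (r-1) A B {w1, z1} (s(z:=i)) (t(z:=j))"
        using k j two True by (intro Rel_twoI[where k'=k and r'=r]) auto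
      then show ?thesis using j two True by (auto simp: insert_commute)
    next
      case False
      then have zz: "z = z1" using var2[OF two(1)] by auto
      have "\<exists>j<length B. sd (s w1) i (t w1) j \<and> W k (r-1) A B i j"
      proof -
        from two(6) show ?thesis
        proof
          assume h: "W k' r' A B (s w1) (t w1) \<and> k \<le> k'"
          then obtain j where "j < length B" "sd (s w1) i (t w1) j" "W k' (r'-1) A B i j"
            using W_same[of k' r' A B "s w1" "t w1" i] i r two(5) k by auto
          then show ?thesis using W_mono[of k' "r'-1" A B i j k "r-1"] h two(5) by auto
        next
          assume h: "W k' r' B A (t w1) (s w1) \<and> Suc k \<le> k'"
          then obtain j where "j < length B" "sd (s w1) i (t w1) j" "W (k'-1) (r'-1) A B i j"
            using W_sw[of k' r' B A "t w1" "s w1" i] i r two(5) k by (auto simp: sd_sym)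
          then show ?thesis using W_mono[of "k'-1" "r'-1" A B i j k "r-1"] h two(5) by auto
        qed
      qed
      then obtain j where j: "j < length B" "sd (s w1) i (t w1) j" "W k (r-1) A B i j" by blast
      have "Rel k (r-1) A B {z1, w1} (s(z:=i)) (t(z:=j))"
        using k j two zz by (intro Rel_twoI[where k'=k' and r'=r']) auto
      then show ?thesis using j two zz by auto
    qed
  qed
qed


lemma Rel_sw:
  assumes R: "Rel k r A B D s t" and r: "0 < r" and k2: "2 \<le> k" and j: "j < length B"
  shows "\<exists>i<length A. Rel (k-1) (r-1) B A (insert z D) (t(z:=j)) (s(z:=i))"
proof -
  have k: "1 \<le> k-1" using k2 by auto
  consider (e) "D = {}" "IA k r A B"
    | (one) z0 k' r' where "D = {z0}" "W k r A B (s z0) (t z0)" "r \<le> r'" "(IA k' r' A B \<and> k \<le> k') \<or> (IA k' r' B A \<and> Suc k \<le> k')"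
    | (two) z1 w1 k' r' where "z1 \<noteq> w1" "D = {z1,w1}" "W k r A B (s z1) (t z1)" "sd (s w1) (s z1) (t w1) (t z1)"
        "r \<le> r'" "(W k' r' A B (s w1) (t w1) \<and> k \<le> k') \<or> (W k' r' B A (t w1) (s w1) \<and> Suc k \<le> k')"
    using R unfolding Rel_def by blast
  then show ?thesis
  proof cases
    case e
    then obtain i where i: "i < length A" "W (k-1) (r-1) B A j i" using j r k2 unfolding IA_def by auto
    have "Rel (k-1) (r-1) B A {z} (t(z:=j)) (s(z:=i))"
      using k i e k2 by (intro Rel_oneI[where k'=k and r'=r]) auto
    then show ?thesis using i e by auto
  next
    case one
    show ?thesis
    proof (cases "z = z0")
      case True
      have "\<exists>i<length A. W (k-1) (r-1) B A j i \<and> (r-1 \<le> r' \<and> ((IA k' r' B A \<and> k-1 \<le> k') \<or> (IA k' r' A B \<and> Suc (k-1) \<le> k')))"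
      proof -
        from one(4) show ?thesis
        proof
          assume h: "IA k' r' A B \<and> k \<le> k'"
          then obtain i where "i < length A" "W (k'-1) (r'-1) B A j i" using j r one(3) k2 unfolding IA_def by auto
          then show ?thesis using W_mono[of "k'-1" "r'-1" B A j i "k-1" "r-1"] h one(3) k2 by auto
        next
          assume h: "IA k' r' B A \<and> Suc k \<le> k'"
          then obtain i where "i < length A" "W k' (r'-1) B A j i" using j r one(3) unfolding IA_def by auto
          then show ?thesis using W_mono[of "k'" "r'-1" B A j i "k-1" "r-1"] h one(3) k2 by auto
        qed
      qed
      then obtain i where i: "i < length A" "W (k-1) (r-1) B A j i"
        "r-1 \<le> r' \<and> ((IA k' r' B A \<and> k-1 \<le> k') \<or> (IA k' r' A B \<and> Suc (k-1) \<le> k'))" by blast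
      have "Rel (k-1) (r-1) B A {z0} (t(z:=j)) (s(z:=i))"
        using k i one True by (intro Rel_oneI[where k'=k' and r'=r']) auto
      then show ?thesis using i one True by auto
    next
      case False
      obtain i where i: "i < length A" "sd (t z0) j (s z0) i" "W (k-1) (r-1) B A j i"
        using W_sw[OF one(2) r k2 j] by blast
      have "Rel (k-1) (r-1) B A {z, z0} (t(z:=j)) (s(z:=i))"
        using k i one False k2 by (intro Rel_twoI[where k'=k and r'=r]) auto
      then show ?thesis using i one by (auto simp: insert_commute)
    qed
  next
    case two
    show ?thesis
    proof (cases "z = w1")
      case True
      obtain i where i: "i < length A" "sd (t z1) j (s z1) i" "W (k-1) (r-1) B A j i"
        using W_sw[OF two(3) r k2 j] by blast
      have "Rel (k-1) (r-1) B A {w1, z1} (t(z:=j)) (s(z:=i))"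
        using k i two True k2 by (intro Rel_twoI[where k'=k and r'=r]) auto
      then show ?thesis using i two True by (auto simp: insert_commute)
    next
      case False
      then have zz: "z = z1" using var2[OF two(1)] by auto
      have "\<exists>i<length A. sd (t w1) j (s w1) i \<and> W (k-1) (r-1) B A j i \<and>
          ((W k' r' B A (t w1) (s w1) \<and> k-1 \<le> k') \<or> (W k' r' A B (s w1) (t w1) \<and> Suc (k-1) \<le> k'))"
      proof -
        from two(6) show ?thesis
        proof
          assume h: "W k' r' A B (s w1) (t w1) \<and> k \<le> k'"
          then obtain i where "i < length A" "sd (t w1) j (s w1) i" "W (k'-1) (r'-1) B A j i"
            using W_sw[of k' r' A B "s w1" "t w1" j] j r two(5) k2 by auto
          then show ?thesis using W_mono[of "k'-1" "r'-1" B A j i "k-1" "r-1"] h two(5) k2 by auto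
        next
          assume h: "W k' r' B A (t w1) (s w1) \<and> Suc k \<le> k'"
          then obtain i where "i < length A" "sd (t w1) j (s w1) i" "W k' (r'-1) B A j i"
            using W_same[of k' r' B A "t w1" "s w1" j] j r two(5) k2 by auto
          then show ?thesis using W_mono[of "k'" "r'-1" B A j i "k-1" "r-1"] h two(5) k2 by auto
        qed
      qed
      then obtain i where i: "i < length A" "sd (t w1) j (s w1) i" "W (k-1) (r-1) B A j i"
          "(W k' r' B A (t w1) (s w1) \<and> k-1 \<le> k') \<or> (W k' r' A B (s w1) (t w1) \<and> Suc (k-1) \<le> k')" by blast
      have "Rel (k-1) (r-1) B A {z1, w1} (t(z:=j)) (s(z:=i))"
        using k i two zz by (intro Rel_twoI[where k'=k' and r'=r']) auto
      then show ?thesis using i two zz by auto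
    qed
  qed
qed

lemma Rel_atom: "Rel k r A B D s t \<Longrightarrow> z \<in> D \<Longrightarrow> s z < length A \<and> t z < length B \<and> A!(s z) = B!(t z)"
  unfolding Rel_def using W_base by fastforce

lemma Rel_ord:
  assumes R: "Rel k r A B D s t" and zD: "z \<in> D" and wD: "w \<in> D"
  shows "(s z < s w) = (t z < t w) \<and> (s z = s w) = (t z = t w)"
proof (cases "z = w")
  case True then show ?thesis by simp
next
  case False
  from R obtain z1 w1 where h: "z1 \<noteq> w1" "D = {z1,w1}" "sd (s w1) (s z1) (t w1) (t z1)"
    unfolding Rel_def using False zD wD by auto
  then have "(z = z1 \<and> w = w1) \<or> (z = w1 \<and> w = z1)" using False zD wD by auto
  then show ?thesis using h(3) unfolding sd_def by (auto simp: nat_neq_iff)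
qed




definition sat' :: "bool \<Rightarrow> nat list \<Rightarrow> (var \<Rightarrow> nat) \<Rightarrow> fo2 \<Rightarrow> bool" where
  "sat' p w s f \<equiv> (if p then sat w s f else \<not> sat w s f)"

lemma blk_sym: "blk (\<not>p) (map_option Not q) f = blk p q f"
proof (induction f arbitrary: p q)
  case (Neg f)
  show ?case using Neg.IH[of "\<not>p" q] by simp
next
  case (Conj f g)
  show ?case using Conj.IH(1)[of p q] Conj.IH(2)[of p q] by simp
next
  case (Disj f g)
  show ?case using Disj.IH(1)[of p q] Disj.IH(2)[of p q] by simp
next
  case (Ex x f)
  have "blk (\<not>p) (Some (\<not>p)) f = blk p (Some p) f" using Ex.IH[of p "Some p"] by simp
  then show ?case by (cases q) auto
next
  case (All x f)
  have "blk (\<not>p) (Some p) f = blk p (Some (\<not>p)) f" using All.IH[of p "Some (\<not>p)"] by simp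
  then show ?case by (cases q) auto
qed simp_all

lemma sound:
  "freev f \<subseteq> D \<Longrightarrow> qdepth f \<le> r \<Longrightarrow> blk p (Some True) f < k \<Longrightarrow> Rel k r A B D s t \<Longrightarrow>
   sat' p A s f \<Longrightarrow> sat' p B t f"
proof (induction f arbitrary: p D r k A B s t)
  case TT
  then show ?case unfolding sat'_def by (cases p) simp_all
next
  case FF
  then show ?case unfolding sat'_def by (cases p) simp_all
next
  case (Lett a x)
  then show ?case using Rel_atom[of k r A B D s t x] by (auto simp: sat'_def)
next
  case (NLett a x)
  then show ?case using Rel_atom[of k r A B D s t x] by (auto simp: sat'_def)
next
  case (Less x y)
  then show ?case using Rel_ord[of k r A B D s t x y] by (auto simp: sat'_def)
next
  case (NLess x y)
  then show ?case using Rel_ord[of k r A B D s t x y] by (auto simp: sat'_def)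
next
  case (Eq x y)
  then show ?case using Rel_ord[of k r A B D s t x y] by (auto simp: sat'_def)
next
  case (NEq x y)
  then show ?case using Rel_ord[of k r A B D s t x y] by (auto simp: sat'_def)
next
  case (Neg f)
  have "sat' (\<not>p) A s f" using Neg.prems(5) by (auto simp: sat'_def)
  then have "sat' (\<not>p) B t f" using Neg.IH[where p="\<not>p"] Neg.prems(1-4) by auto
  then show ?case by (auto simp: sat'_def)
next
  case (Conj f g)
  have f: "sat' p A s f \<Longrightarrow> sat' p B t f" using Conj.IH(1)[where p=p] Conj.prems(1-4) by auto
  have g: "sat' p A s g \<Longrightarrow> sat' p B t g" using Conj.IH(2)[where p=p] Conj.prems(1-4) by auto
  show ?case using f g Conj.prems(5) by (cases p) (auto simp: sat'_def)
next
  case (Disj f g)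
  have f: "sat' p A s f \<Longrightarrow> sat' p B t f" using Disj.IH(1)[where p=p] Disj.prems(1-4) by auto
  have g: "sat' p A s g \<Longrightarrow> sat' p B t g" using Disj.IH(2)[where p=p] Disj.prems(1-4) by auto
  show ?case using f g Disj.prems(5) by (cases p) (auto simp: sat'_def)
next
  case (Ex z f)
  obtain r0 where r0: "r = Suc r0" "qdepth f \<le> r0" using Ex.prems(2) by (cases r) auto
  have fv: "freev f \<subseteq> insert z D" using Ex.prems(1) by auto
  show ?case
  proof (cases p)
    case True
    then have bl: "blk True (Some True) f < k" using Ex.prems(3) by simp
    from Ex.prems(5) True obtain i where i: "i < length A" "sat A (s(z:=i)) f" by (auto simp: sat'_def)
    obtain j where j: "j < length B" "Rel k r0 A B (insert z D) (s(z:=i)) (t(z:=j))"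
      using Rel_same[OF Ex.prems(4) _ i(1), of z] r0 by auto
    have "sat' True B (t(z:=j)) f" using Ex.IH[OF fv r0(2) bl j(2)] i unfolding sat'_def if_True if_False by blast
    then show ?thesis using True j by (auto simp: sat'_def)
  next
    case False
    then have bl: "blk False (Some False) f < k - 1" "2 \<le> k" using Ex.prems(3) by auto
    have bl2: "blk True (Some True) f < k - 1" using bl blk_sym[of True "Some True" f] by simp
    have "\<not> sat B (t(z:=j)) f" if j: "j < length B" for j
    proof
      assume sj: "sat B (t(z:=j)) f"
      obtain i where i: "i < length A" "Rel (k-1) r0 B A (insert z D) (t(z:=j)) (s(z:=i))"
        using Rel_sw[OF Ex.prems(4) _ bl(2) j, of z] r0 by auto
      have "sat' True A (s(z:=i)) f" using Ex.IH[OF fv r0(2) bl2 i(2)] sj unfolding sat'_def if_True if_False by blast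
      then show False using Ex.prems(5) False i by (auto simp: sat'_def)
    qed
    then show ?thesis using False by (auto simp: sat'_def)
  qed
next
  case (All z f)
  obtain r0 where r0: "r = Suc r0" "qdepth f \<le> r0" using All.prems(2) by (cases r) auto
  have fv: "freev f \<subseteq> insert z D" using All.prems(1) by auto
  show ?case
  proof (cases p)
    case False
    then have bl: "blk False (Some True) f < k" using All.prems(3) by simp
    from All.prems(5) False obtain i where i: "i < length A" "\<not> sat A (s(z:=i)) f" by (auto simp: sat'_def)
    obtain j where j: "j < length B" "Rel k r0 A B (insert z D) (s(z:=i)) (t(z:=j))"
      using Rel_same[OF All.prems(4) _ i(1), of z] r0 by auto
    have "sat' False B (t(z:=j)) f" using All.IH[OF fv r0(2) bl j(2)] i unfolding sat'_def if_True if_False by blast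
    then show ?thesis using False j by (auto simp: sat'_def)
  next
    case True
    then have bl: "blk True (Some False) f < k - 1" "2 \<le> k" using All.prems(3) by auto
    have bl2: "blk False (Some True) f < k - 1" using bl blk_sym[of False "Some True" f] by simp
    have "sat B (t(z:=j)) f" if j: "j < length B" for j
    proof (rule ccontr)
      assume sj: "\<not> sat B (t(z:=j)) f"
      obtain i where i: "i < length A" "Rel (k-1) r0 B A (insert z D) (t(z:=j)) (s(z:=i))"
        using Rel_sw[OF All.prems(4) _ bl(2) j, of z] r0 by auto
      have "sat' False A (s(z:=i)) f" using All.IH[OF fv r0(2) bl2 i(2)] sj unfolding sat'_def if_True if_False by blast
      then show False using All.prems(5) True i by (auto simp: sat'_def)
    qed
    then show ?thesis using True by (auto simp: sat'_def)
  qed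
qed




lemma Elem:
  "freev f = {} \<Longrightarrow> blk p None f \<le> k \<Longrightarrow> qdepth f \<le> r \<Longrightarrow> (1 \<le> k \<Longrightarrow> IA k r u v \<and> IA k r v u) \<Longrightarrow>
   sat u s f = sat v t f"
proof (induction f arbitrary: p)
  case (Neg f)
  then show ?case using Neg.IH[of "\<not>p"] by simp
next
  case (Conj f g)
  then show ?case using Conj.IH(1)[of p] Conj.IH(2)[of p] by simp
next
  case (Disj f g)
  then show ?case using Disj.IH(1)[of p] Disj.IH(2)[of p] by simp
next
  case (Ex z f)
  have k1: "1 \<le> k" using Ex.prems(2) by simp
  have bl0: "1 + blk p (Some p) f \<le> k" using Ex.prems(2) by simp
  have bl: "blk True (Some True) (Ex z f) < k"
  proof (cases p)
    case True then show ?thesis using bl0 by simp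
  next
    case False then show ?thesis using bl0 blk_sym[of True "Some True" f] by simp
  qed
  have R1: "Rel k r u v {} s t" and R2: "Rel k r v u {} t s" using Ex.prems(4) k1 unfolding Rel_def by auto
  have "sat' True u s (Ex z f) \<Longrightarrow> sat' True v t (Ex z f)" using sound[OF _ Ex.prems(3) bl R1] Ex.prems(1) by auto
  moreover have "sat' True v t (Ex z f) \<Longrightarrow> sat' True u s (Ex z f)" using sound[OF _ Ex.prems(3) bl R2] Ex.prems(1) by auto
  ultimately show ?case unfolding sat'_def if_True by blast
next
  case (All z f)
  have k1: "1 \<le> k" using All.prems(2) by simp
  have bl0: "1 + blk p (Some (\<not>p)) f \<le> k" using All.prems(2) by simp
  have bl: "blk False (Some True) (All z f) < k"
  proof (cases p)
    case True then show ?thesis using bl0 blk_sym[of False "Some True" f] by simp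
  next
    case False then show ?thesis using bl0 by simp
  qed
  have R1: "Rel k r u v {} s t" and R2: "Rel k r v u {} t s" using All.prems(4) k1 unfolding Rel_def by auto
  have "sat' False u s (All z f) \<Longrightarrow> sat' False v t (All z f)" using sound[OF _ All.prems(3) bl R1] All.prems(1) by auto
  moreover have "sat' False v t (All z f) \<Longrightarrow> sat' False u s (All z f)" using sound[OF _ All.prems(3) bl R2] All.prems(1) by auto
  ultimately show ?case unfolding sat'_def if_False by blast
qed simp_all

lemma IA_uv:
  assumes m: "2 \<le> m"
  shows "IA (m-1) n (uw m n) (vw m n) \<and> IA (m-1) n (vw m n) (uw m n)"
proof -
  have Q: "Q m n" using Q_all m by auto
  have w: "weaker (replicate i BF) (replicate i BF @ [tl_of m])" for i
    unfolding weaker_def by (auto simp: nth_append)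
  have I: "Init (replicate i BF @ [tl_of m]) (n-1) (uw m n) (vw m n) \<and> Init (replicate i BF @ [tl_of m]) (n-1) (vw m n) (uw m n)"
    if "i \<le> m-1" "0 < n" for i
    using Q that unfolding Q_def by auto
  have WI: "\<forall>a<length A. \<exists>b<length B. W i (n-1) A B a b"
    if "Init (replicate i BF @ [tl_of m]) (n-1) A B" for i A B
    using that Win_mono[OF _ le_refl w] unfolding Init_def W_def by blast
  show ?thesis unfolding IA_def using I WI m
    by (metis diff_le_self le_refl)
qed

theorem lemma4p10:
  fixes m n :: nat
  assumes "m \<ge> 1" and "n \<ge> 1"
  shows "equiv2 m (m - 1) n (uw m n) (vw m n)"
  unfolding equiv2_def
proof
  fix f assume "f \<in> FO2_kn m (m - 1) n"
  then have f: "freev f = {}" "qdepth f \<le> n" "blk True None f \<le> m - 1"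
    unfolding FO2_kn_def alt_blocks_def by auto
  have "1 \<le> m - 1 \<Longrightarrow> IA (m-1) n (uw m n) (vw m n) \<and> IA (m-1) n (vw m n) (uw m n)"
    using IA_uv by auto
  then show "models (uw m n) f = models (vw m n) f"
    unfolding models_def using Elem[OF f(1) f(3) f(2)] by blast
qed


end
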